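(* Let $n,m,c$ be positive integers and $r,s,R,S$ nonnegative integers. Let $\alpha\in\mathrm{Par}(R,r)$, $\beta\in\mathrm{Par}(S,s)$, $\lambda\in\mathrm{Par}(n-R,c)$ and $\mu\in\mathrm{Par}(m-S,c)$. Define the annular $q$-Kreweras number \[ \mathrm{Kre}_q = q^{E}\, \frac{[nm]_q}{[n]_q[m]_q} \frac{[2c]_q}{2} \frac{[n-R]_q[m-S]_q}{[c]_q^2} \begin{bmatrix}n\\ r\end{bmatrix}_q\begin{bmatrix}m\\ s\end{bmatrix}_q \begin{bmatrix}r\\ \alpha\end{bmatrix}_q \begin{bmatrix}s\\ \beta\end{bmatrix}_q \begin{bmatrix}c\\ \lambda\end{bmatrix}_q \begin{bmatrix}c\\ \mu\end{bmatrix}_q, \] where \[ E=c(c-1)+r(c+r)+s(c+s)+r(n-c-R)+s(m-c-S)+r(R-r)+s(S-s)+c(n-R-c)+c(m-S-c)-\tau(\alpha)-\tau(\beta)-\tau(\lambda)-\tau(\mu). \] Then $\mathrm{Kre}_q$ is a polynomial in $q$.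
   Context: $\mathrm{Par}(N,k)$ is the set of integer partitions of $N$ with $k$ parts. Write $\lambda=(1^{m_1},2^{m_2},\dots)$ if $\lambda$ has $m_i$ parts equal to $i$. For a partition $\lambda$ with conjugate $\lambda'$, $\tau(\lambda)=\sum_{i\ge1}\lambda'_i\lambda'_{i+1}$. The $q$-notation is $[N]_q=(1-q^N)/(1-q)$, $[N]_q!=[1]_q\cdots[N]_q$, $\begin{bmatrix}N\\k\end{bmatrix}_q=\frac{[N]_q!}{[k]_q![N-k]_q!}$, and, for $\lambda$ with $k$ parts, $\begin{bmatrix}k\\ \lambda\end{bmatrix}_q=\frac{[k]_q!}{[m_1]_q![m_2]_q!\cdots}$. "Polynomial" here means polynomial with (possibly non-integer) rational coefficients. *)

theory Defs
  imports Complex_Main "HOL-Library.Multiset" "HOL-Computational_Algebra.Polynomial"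
begin

definition Par :: "nat \<Rightarrow> nat \<Rightarrow> nat multiset set" where
  "Par N k = {lam. 0 \<notin># lam \<and> sum_mset lam = N \<and> size lam = k}"

definition conj_part :: "nat multiset \<Rightarrow> nat \<Rightarrow> nat" where
  "conj_part lam i = size (filter_mset (\<lambda>x. i \<le> x) lam)"

text \<open>tau(lam) = sum over i >= 1 of lam'_i lam'_(i+1); terms vanish for i > sum lam.\<close>
definition tau :: "nat multiset \<Rightarrow> nat" where
  "tau lam = (\<Sum>i\<in>{1..sum_mset lam}. conj_part lam i * conj_part lam (i+1))"

definition qint :: "real \<Rightarrow> nat \<Rightarrow> real" where
  "qint q N = (1 - q ^ N) / (1 - q)"

definition qfact :: "real \<Rightarrow> nat \<Rightarrow> real" where
  "qfact q N = (\<Prod>i\<in>{1..N}. qint q i)"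

definition qbinom :: "real \<Rightarrow> nat \<Rightarrow> nat \<Rightarrow> real" where
  "qbinom q N k = qfact q N / (qfact q k * qfact q (N - k))"

definition qmultinom :: "real \<Rightarrow> nat \<Rightarrow> nat multiset \<Rightarrow> real" where
  "qmultinom q k lam = qfact q k / (\<Prod>i\<in>set_mset lam. qfact q (count lam i))"

definition kre_exp :: "nat \<Rightarrow> nat \<Rightarrow> nat \<Rightarrow> nat \<Rightarrow> nat \<Rightarrow> nat \<Rightarrow> nat \<Rightarrow>
    nat multiset \<Rightarrow> nat multiset \<Rightarrow> nat multiset \<Rightarrow> nat multiset \<Rightarrow> int" where
  "kre_exp n m c r s R S alpha beta lam mu =
     (let n = int n; m = int m; c = int c; r = int r; s = int s; R = int R; S = int S in
      c*(c-1) + r*(c+r) + s*(c+s) + r*(n-c-R) + s*(m-c-S) + r*(R-r) + s*(S-s)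
      + c*(n-R-c) + c*(m-S-c)
      - int (tau alpha) - int (tau beta) - int (tau lam) - int (tau mu))"

definition annular_kre :: "real \<Rightarrow> nat \<Rightarrow> nat \<Rightarrow> nat \<Rightarrow> nat \<Rightarrow> nat \<Rightarrow> nat \<Rightarrow> nat \<Rightarrow>
    nat multiset \<Rightarrow> nat multiset \<Rightarrow> nat multiset \<Rightarrow> nat multiset \<Rightarrow> real" where
  "annular_kre q n m c r s R S alpha beta lam mu =
     q powi (kre_exp n m c r s R S alpha beta lam mu)
     * (qint q (n*m) / (qint q n * qint q m))
     * (qint q (2*c) / 2)
     * (qint q (n - R) * qint q (m - S) / (qint q c)^2)
     * qbinom q n r * qbinom q m s
     * qmultinom q r alpha * qmultinom q s beta
     * qmultinom q c lam * qmultinom q c mu"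

end

theory Submission
  imports Defs "HOL-Computational_Algebra.Fundamental_Theorem_Algebra"
begin


lemma map_rat_add: "map_poly (of_rat :: rat \<Rightarrow> 'a::field_char_0) (p + q) = map_poly of_rat p + map_poly of_rat q"
  by (intro poly_eqI) (simp add: coeff_map_poly of_rat_add)

lemma map_rat_mult: "map_poly (of_rat :: rat \<Rightarrow> 'a::field_char_0) (p * q) = map_poly of_rat p * map_poly of_rat q"
  by (intro poly_eqI) (simp add: coeff_map_poly coeff_mult of_rat_sum of_rat_mult)

lemma map_rat_eq0: "map_poly (of_rat :: rat \<Rightarrow> 'a::field_char_0) p = 0 \<longleftrightarrow> p = 0"
  by (rule map_poly_eq_0_iff) auto

lemma map_rat_degree: "degree (map_poly (of_rat :: rat \<Rightarrow> 'a::field_char_0) p) = degree p"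
  by (rule degree_map_poly) auto

lemma complex_dvd_by_order:
  fixes p q :: "complex poly"
  assumes "p \<noteq> 0" "\<And>z. order z p \<le> order z q"
  shows "p dvd q"
  using assms
proof (induction "degree p" arbitrary: p q rule: less_induct)
  case less
  show ?case
  proof (cases "q = 0")
    case True then show ?thesis by simp
  next
    case qnz: False
    show ?thesis
    proof (cases "degree p = 0")
      case True
      then have "is_unit p" using less.prems(1) is_unit_iff_degree by blast
      then show ?thesis by (simp add: unit_imp_dvd)
    next
      case False
      then have "\<not> constant (poly p)" by (simp add: constant_degree)
      then obtain z where z: "poly p z = 0" using fundamental_theorem_of_algebra by blast
      then obtain p' where p': "p = [:-z,1:] * p'" using poly_eq_0_iff_dvd by blast
      have "order z p > 0" using z less.prems(1) order_gt_0_iff by blast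
      then have "order z q > 0" using less.prems(2)[of z] by linarith
      then have "poly q z = 0" using qnz order_gt_0_iff by blast
      then obtain q' where q': "q = [:-z,1:] * q'" using poly_eq_0_iff_dvd by blast
      have p'nz: "p' \<noteq> 0" using p' less.prems(1) by auto
      have q'nz: "q' \<noteq> 0" using q' qnz by auto
      have "order w p' \<le> order w q'" for w
      proof -
        have "order w p = order w [:-z,1:] + order w p'"
          using p' less.prems(1) by (metis order_mult)
        moreover have "order w q = order w [:-z,1:] + order w q'"
          using q' qnz by (metis order_mult)
        ultimately show ?thesis using less.prems(2)[of w] by linarith
      qed
      moreover have "degree p' < degree p"
        unfolding p' using p'nz by (subst degree_mult_eq) auto
      ultimately have "p' dvd q'" using less.hyps p'nz by blast
      then show ?thesis unfolding p' q' by (rule mult_dvd_mono[OF dvd_refl])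
    qed
  qed
qed

lemma rat_dvd_by_order:
  fixes A B :: "rat poly"
  assumes "B \<noteq> 0" "\<And>z::complex. order z (map_poly of_rat B) \<le> order z (map_poly of_rat A)"
  shows "B dvd A"
proof (rule ccontr)
  assume nd: "\<not> B dvd A"
  then have rnz: "A mod B \<noteq> 0" by (simp add: mod_eq_0_iff_dvd)
  have "A = B * (A div B) + A mod B" by simp
  then have eq: "(map_poly of_rat A :: complex poly) = map_poly of_rat B * map_poly of_rat (A div B) + map_poly of_rat (A mod B)"
    by (metis map_rat_add map_rat_mult)
  have Bnz: "(map_poly of_rat B :: complex poly) \<noteq> 0" using assms(1) map_rat_eq0 by blast
  have "(map_poly of_rat B :: complex poly) dvd map_poly of_rat A"
    using complex_dvd_by_order[OF Bnz assms(2)] .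
  then have "(map_poly of_rat B :: complex poly) dvd map_poly of_rat (A mod B)"
    using eq by (metis dvd_add_right_iff dvd_triv_left)
  moreover have "(map_poly of_rat (A mod B) :: complex poly) \<noteq> 0" using rnz map_rat_eq0 by blast
  ultimately have "degree (map_poly of_rat B :: complex poly) \<le> degree (map_poly of_rat (A mod B) :: complex poly)"
    using dvd_imp_degree_le by blast
  then have "degree B \<le> degree (A mod B)" by (simp add: map_rat_degree)
  moreover have "degree (A mod B) < degree B" using degree_mod_less'[OF assms(1) rnz] .
  ultimately show False by linarith
qed



primrec qp :: "nat \<Rightarrow> 'a::comm_ring_1 poly" where
  "qp 0 = 0" | "qp (Suc k) = pCons 1 (qp k)"

lemma poly_qp: "poly (qp k) x = (\<Sum>i<k. x ^ i)"
  by (induction k) (simp_all add: sum.lessThan_Suc_shift sum_distrib_left power_Suc del: sum.lessThan_Suc)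

lemma map_rat_qp: "map_poly (of_rat :: rat \<Rightarrow> 'a::field_char_0) (qp k) = qp k"
  by (induction k) (simp_all add: map_poly_pCons)

lemma poly_qp_real: "(q::real) \<noteq> 1 \<Longrightarrow> poly (qp k) q = qint q k"
  by (simp add: poly_qp sum_gp_strict qint_def)

lemma qp_nz: "k > 0 \<Longrightarrow> (qp k :: 'a::comm_ring_1 poly) \<noteq> 0"
  by (cases k) auto

lemma qp_times: "[:-1,1:] * (qp k :: complex poly) = monom 1 k - 1"
proof -
  have "poly ([:-1,1:] * (qp k :: complex poly)) = poly (monom 1 k - 1)"
  proof
    fix x :: complex
    show "poly ([:-1,1:] * qp k) x = poly (monom 1 k - 1) x"
      using power_diff_1_eq[of x k] by (simp add: poly_qp poly_monom algebra_simps)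
  qed
  then show ?thesis using poly_eq_poly_eq_iff by blast
qed

lemma order_qp:
  fixes z :: complex
  assumes "k > 0"
  shows "order z (qp k) = (if z \<noteq> 1 \<and> z ^ k = 1 then 1 else 0)"
proof -
  have nz: "(qp k :: complex poly) \<noteq> 0" using qp_nz assms by blast
  have ev: "(z - 1) * poly (qp k) z = z ^ k - 1"
    using arg_cong[OF qp_times, of "\<lambda>p. poly p z"] by (simp add: poly_monom algebra_simps)
  show ?thesis
  proof (cases "z \<noteq> 1 \<and> z ^ k = 1")
    case False
    have "poly (qp k) z \<noteq> 0"
    proof (cases "z = 1")
      case True then show ?thesis using assms by (simp add: poly_qp)
    next
      case False2: False
      then have "z ^ k \<noteq> 1" using False by auto
      then show ?thesis using ev by auto
    qed
    then show ?thesis using False order_0I by auto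
  next
    case True
    then have r: "poly (qp k) z = 0" using ev by simp
    then have g: "order z (qp k) > 0" using nz order_gt_0_iff by blast
    have mnz: "(monom 1 k - 1 :: complex poly) \<noteq> 0"
    proof
      assume "(monom 1 k - 1 :: complex poly) = 0"
      then have "coeff (monom 1 k - 1 :: complex poly) k = 0" by simp
      then show False using assms by (simp add: coeff_monom)
    qed
    have "qp k dvd (monom 1 k - 1 :: complex poly)" using qp_times by (metis dvd_triv_right)
    then have le: "order z (qp k) \<le> order z (monom 1 k - 1 :: complex poly)"
      using dvd_imp_order_le mnz by blast
    have zr: "poly (monom 1 k - 1 :: complex poly) z = 0" using True by (simp add: poly_monom algebra_simps)
    have z0: "z \<noteq> 0" using True assms by (metis power_0_left less_not_refl zero_neq_one)
    have "poly (pderiv (monom 1 k - 1 :: complex poly)) z \<noteq> 0"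
      using z0 assms by (simp add: pderiv_diff pderiv_monom poly_monom)
    then have "order z (pderiv (monom 1 k - 1 :: complex poly)) = 0" by (rule order_0I)
    then have "order z (monom 1 k - 1 :: complex poly) = 1"
      using order_pderiv[OF mnz zr] by simp
    then show ?thesis using le g True by simp
  qed
qed



definition QP :: "nat multiset \<Rightarrow> 'a::comm_ring_1 poly" where
  "QP M = prod_mset (image_mset qp M)"

definition cnt :: "nat \<Rightarrow> nat multiset \<Rightarrow> nat" where
  "cnt d M = size (filter_mset (\<lambda>k. d dvd k) M)"

lemma map_rat_QP: "map_poly (of_rat :: rat \<Rightarrow> 'a::field_char_0) (QP M) = QP M"
  unfolding QP_def by (induction M) (simp_all add: map_rat_mult map_rat_qp)

lemma poly_QP_real: "(q::real) \<noteq> 1 \<Longrightarrow> poly (QP M) q = prod_mset (image_mset (qint q) M)"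
  unfolding QP_def by (induction M) (simp_all add: poly_qp_real)

lemma QP_nz: "0 \<notin># M \<Longrightarrow> (QP M :: 'a::idom poly) \<noteq> 0"
  unfolding QP_def by (induction M) (auto simp: qp_nz)

lemma order_QP:
  fixes z :: complex
  assumes "0 \<notin># M"
  shows "order z (QP M) = size (filter_mset (\<lambda>k. z \<noteq> 1 \<and> z ^ k = 1) M)"
  using assms
proof (induction M)
  case empty then show ?case by (simp add: QP_def)
next
  case (add x M)
  have nz: "(QP (add_mset x M) :: complex poly) \<noteq> 0" using QP_nz add.prems by blast
  have "QP (add_mset x M) = (qp x :: complex poly) * QP M" by (simp add: QP_def)
  then have "order z (QP (add_mset x M)) = order z (qp x :: complex poly) + order z (QP M :: complex poly)"
    using nz by (metis order_mult)
  then show ?case using add order_qp[of x z] by auto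
qed

lemma root_unity_period:
  fixes z :: complex
  shows "(\<forall>k>0. \<not> (z \<noteq> 1 \<and> z ^ k = 1)) \<or> (\<exists>d>0. \<forall>k. (z ^ k = 1) = (d dvd k))"
proof (cases "\<exists>k>0. z ^ k = 1")
  case False
  have "\<forall>k>0. \<not> (z \<noteq> 1 \<and> z ^ k = 1)"
  proof (intro allI impI)
    fix k :: nat assume "k > 0"
    then show "\<not> (z \<noteq> 1 \<and> z ^ k = 1)" using False
      apply - apply (rule notI) apply (erule notE) apply (rule exI[of _ k]) apply (erule conjE) apply (intro conjI) apply assumption+ done
  qed
  then show ?thesis by (rule disjI1)
next
  case True
  define d where "d = (LEAST k. k > 0 \<and> z ^ k = 1)"
  have d: "d > 0 \<and> z ^ d = 1" using LeastI_ex[OF True] unfolding d_def .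
  have dmin: "\<not> (k > 0 \<and> z ^ k = 1)" if "k < d" for k
    using not_less_Least[of k "\<lambda>k. k > 0 \<and> z ^ k = 1"] that unfolding d_def by blast
  have "(z ^ k = 1) = (d dvd k)" for k
  proof
    assume zk: "z ^ k = 1"
    have "z ^ k = z ^ (d * (k div d) + k mod d)" by (simp only: mult_div_mod_eq)
    also have "\<dots> = (z ^ d) ^ (k div d) * z ^ (k mod d)" by (simp only: power_add power_mult)
    finally have "z ^ k = (z ^ d) ^ (k div d) * z ^ (k mod d)" .
    moreover have "(z ^ d) ^ (k div d) * z ^ (k mod d) = z ^ (k mod d)"
      using conjunct2[OF d] by (simp only: power_one mult_1)
    ultimately have zm: "z ^ (k mod d) = 1" using zk by (simp only:)
    have "k mod d < d" using d by simp
    then have "\<not> (k mod d > 0 \<and> z ^ (k mod d) = 1)" by (rule dmin)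
    then have "\<not> (k mod d > 0)" using zm by (simp only: simp_thms)
    then show "d dvd k" by (simp add: dvd_eq_mod_eq_0)
  next
    assume "d dvd k"
    then obtain j where "k = d * j" by blast
    then show "z ^ k = 1" using d by (simp add: power_mult)
  qed
  then show ?thesis using d by blast
qed

lemma QP_dvd:
  assumes "0 \<notin># DM" "0 \<notin># NM" "\<And>d. d > 0 \<Longrightarrow> cnt d DM \<le> cnt d NM"
  shows "(QP DM :: rat poly) dvd QP NM"
proof (rule rat_dvd_by_order)
  show "(QP DM :: rat poly) \<noteq> 0" using QP_nz assms(1) by blast
  fix z :: complex
  show "order z (map_poly of_rat (QP DM :: rat poly)) \<le> order z (map_poly of_rat (QP NM :: rat poly))"
    unfolding map_rat_QP order_QP[OF assms(1)] order_QP[OF assms(2)]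
  proof (cases "\<forall>k>0. \<not> (z \<noteq> 1 \<and> z ^ k = 1)")
    case True
    show "size (filter_mset (\<lambda>k. z \<noteq> 1 \<and> z ^ k = 1) DM) \<le> size (filter_mset (\<lambda>k. z \<noteq> 1 \<and> z ^ k = 1) NM)"
    proof -
      have "filter_mset (\<lambda>k. z \<noteq> 1 \<and> z ^ k = 1) DM = filter_mset (\<lambda>_. False) DM"
      proof (rule filter_mset_cong)
        fix k assume "k \<in># DM"
        then have "k > 0" using assms(1) by (metis neq0_conv)
        then show "(z \<noteq> 1 \<and> z ^ k = 1) = False" using True by blast
      qed simp
      then show "size (filter_mset (\<lambda>k. z \<noteq> 1 \<and> z ^ k = 1) DM) \<le> size (filter_mset (\<lambda>k. z \<noteq> 1 \<and> z ^ k = 1) NM)" by (metis filter_mset_False size_empty zero_le)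
    qed
  next
    case False
    then obtain d where d: "d > 0" "\<And>k. (z ^ k = 1) = (d dvd k)" using root_unity_period by blast
    have z1: "z \<noteq> 1" using False by auto
    have "filter_mset (\<lambda>k. z \<noteq> 1 \<and> z ^ k = 1) DM = filter_mset (\<lambda>k. d dvd k) DM"
      using z1 d(2) by (intro filter_mset_cong) auto
    moreover have "filter_mset (\<lambda>k. z \<noteq> 1 \<and> z ^ k = 1) NM = filter_mset (\<lambda>k. d dvd k) NM"
      using z1 d(2) by (intro filter_mset_cong) auto
    ultimately show "size (filter_mset (\<lambda>k. z \<noteq> 1 \<and> z ^ k = 1) DM) \<le> size (filter_mset (\<lambda>k. z \<noteq> 1 \<and> z ^ k = 1) NM)"
      using assms(3)[OF d(1)] by (simp add: cnt_def)
  qed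
qed



lemma div_sum_le:
  assumes "(d::nat) > 0"
  shows "a div d + b div d \<le> (a + b) div d"
  using div_add1_eq le_iff_add by blast

lemma mod_sum_d: "(z + y) mod (d::nat) = 0 \<Longrightarrow> 0 < y \<Longrightarrow> y < d \<Longrightarrow> z < d \<Longrightarrow> z + y = d"
  by (smt (verit) Nat.add_0_right add.assoc add.commute
    canonically_ordered_monoid_add_class.lessE less_add_same_cancel2
    mod_add_right_eq mod_add_self1 mod_less)

lemma div_sum_strict:
  assumes "(d::nat) > 0" "d dvd (a + b)" "\<not> d dvd b"
  shows "a div d + b div d + 1 \<le> (a + b) div d"
proof -
  have m: "(a mod d + b mod d) mod d = 0" using assms(2) by (simp add: mod_add_eq dvd_eq_mod_eq_0)
  have "b mod d > 0" using assms(3) by (simp add: dvd_eq_mod_eq_0)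
  moreover have "a mod d < d" "b mod d < d" using assms(1) by auto
  ultimately have "a mod d + b mod d = d" using m by (intro mod_sum_d) auto
  then have "(a + b) div d = a div d + b div d + 1"
    using assms(1) by (simp add: div_add1_eq)
  then show ?thesis by simp
qed



definition SS :: "nat multiset \<Rightarrow> nat \<Rightarrow> nat" where
  "SS A d = (\<Sum>i\<in>set_mset A. count A i div d)"

lemma sum_mset_count: "finite S \<Longrightarrow> set_mset A \<subseteq> S \<Longrightarrow> sum_mset A = (\<Sum>x\<in>S. count A x * x)"
proof (induction A)
  case empty then show ?case by simp
next
  case (add a A)
  have "(\<Sum>x\<in>S. count (add_mset a A) x * x) = (\<Sum>x\<in>S. count A x * x + (if x = a then x else 0))"
    by (intro sum.cong) auto
  also have "\<dots> = (\<Sum>x\<in>S. count A x * x) + a"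
    using add.prems by (simp add: sum.distrib)
  finally show ?case using add by simp
qed

lemma size_le_sum_mset: "0 \<notin># A \<Longrightarrow> size A \<le> sum_mset (A :: nat multiset)"
proof (induction A)
  case empty then show ?case by simp
next
  case (add x A)
  then have "x \<ge> 1" "size A \<le> sum_mset A" by auto
  then show ?case by simp
qed

lemma SS_le: "(d::nat) > 0 \<Longrightarrow> d * SS A d \<le> size A"
proof -
  have "d * SS A d = (\<Sum>i\<in>set_mset A. d * (count A i div d))" by (simp add: SS_def sum_distrib_left)
  also have "\<dots> \<le> (\<Sum>i\<in>set_mset A. count A i)" by (intro sum_mono) (simp add: times_div_less_eq_dividend)
  finally show "d * SS A d \<le> size A" by (simp add: size_multiset_overloaded_eq)
qed

lemma SS_lt: "(d::nat) > 0 \<Longrightarrow> \<exists>i\<in>#A. \<not> d dvd count A i \<Longrightarrow> d * SS A d < size A"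
proof -
  assume d: "d > 0" and ex: "\<exists>i\<in>#A. \<not> d dvd count A i"
  have "d * SS A d = (\<Sum>i\<in>set_mset A. d * (count A i div d))" by (simp add: SS_def sum_distrib_left)
  also have "\<dots> < (\<Sum>i\<in>set_mset A. count A i)"
  proof (rule sum_strict_mono_ex1)
    show "\<forall>x\<in>set_mset A. d * (count A x div d) \<le> count A x" by (simp add: times_div_less_eq_dividend)
    show "\<exists>a\<in>set_mset A. d * (count A a div d) < count A a"
    proof -
      from ex obtain i where i: "i \<in># A" "\<not> d dvd count A i" by blast
      have "d * (count A i div d) \<noteq> count A i" using i(2) by (metis dvd_triv_left)
      then have "d * (count A i div d) < count A i" using times_div_less_eq_dividend[of d "count A i"] by linarith
      then show ?thesis using i(1) by blast
    qed
  qed simp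
  finally show "d * SS A d < size A" by (simp add: size_multiset_overloaded_eq)
qed

lemma all_dvd: "\<forall>i\<in>#A. (d::nat) dvd count A i \<Longrightarrow> d dvd size A \<and> d dvd sum_mset A"
proof -
  assume a: "\<forall>i\<in>#A. d dvd count A i"
  have "d dvd (\<Sum>i\<in>set_mset A. count A i)" using a by (intro dvd_sum) auto
  moreover have "d dvd (\<Sum>x\<in>set_mset A. count A x * x)" using a by (intro dvd_sum) auto
  ultimately show ?thesis by (simp add: size_multiset_overloaded_eq sum_mset_count[of "set_mset A" A])
qed

lemma SS_le_div: "(d::nat) > 0 \<Longrightarrow> SS A d \<le> size A div d"
  using SS_le by (simp add: less_eq_div_iff_mult_less_eq mult.commute)

lemma alpha_side:
  assumes d: "(d::nat) > 0" and A: "0 \<notin># A" "size A = r" "sum_mset A = R" and RN: "R \<le> N"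
  shows "(N - r) div d + SS A d + (if d dvd N \<and> \<not> d dvd (N - R) then 1 else 0) \<le> N div d"
proof -
  have rR: "r \<le> R" using size_le_sum_mset A by metis
  have S1: "SS A d \<le> r div d" using SS_le_div[OF d, of A] A(2) by simp
  have base: "(N - r) div d + r div d \<le> N div d"
    using div_sum_le[OF d, of "N - r" r] rR RN by simp
  show ?thesis
  proof (cases "d dvd N \<and> \<not> d dvd (N - R)")
    case False
    then have "(if d dvd N \<and> \<not> d dvd (N - R) then 1 else 0) = (0::nat)" by simp
    then show ?thesis using S1 base by linarith
  next
    case True
    have "\<not> (\<forall>i\<in>#A. d dvd count A i)"
    proof
      assume "\<forall>i\<in>#A. d dvd count A i"
      then have "d dvd R" using all_dvd A by blast
      then have "d dvd (N - R)" using True dvd_diff_nat by blast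
      then show False using True by blast
    qed
    then have lt: "d * SS A d < r" using SS_lt[OF d, of A] A by blast
    show ?thesis
    proof (cases "d dvd r")
      case True
      then obtain j where j: "r = d * j" by blast
      then have "SS A d < j" using lt by simp
      moreover have "r div d = j" using j d by simp
      ultimately show ?thesis using base True by simp
    next
      case False
      have "(N - r) div d + r div d + 1 \<le> ((N - r) + r) div d"
        using div_sum_strict[OF d, of "N - r" r] False True rR RN by simp
      then show ?thesis using S1 rR RN \<open>d dvd N \<and> \<not> d dvd (N - R)\<close> by simp
    qed
  qed
qed

lemma lam_side:
  assumes d: "(d::nat) > 0" and L: "0 \<notin># L" "size L = c" "sum_mset L = x"
  shows "SS L d + (if d dvd c then 1 else 0) \<le> c div d + (if d dvd x then 1 else 0)"
    and "SS L d \<le> c div d"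
proof -
  show S1: "SS L d \<le> c div d" using SS_le_div[OF d, of L] L(2) by simp
  show "SS L d + (if d dvd c then 1 else 0) \<le> c div d + (if d dvd x then 1 else 0)"
  proof (cases "d dvd c")
    case False then show ?thesis using S1 by simp
  next
    case True
    show ?thesis
    proof (cases "\<forall>i\<in>#L. d dvd count L i")
      case True
      then have "d dvd x" using all_dvd L by blast
      then show ?thesis using S1 by simp
    next
      case False
      then have lt: "d * SS L d < c" using SS_lt[OF d, of L] L by blast
      from \<open>d dvd c\<close> obtain j where j: "c = d * j" by blast
      then have "SS L d < j" using lt by simp
      moreover have "c div d = j" using j d by simp
      ultimately show ?thesis using \<open>d dvd c\<close> by simp
    qed
  qed
qed



definition Fm :: "nat \<Rightarrow> nat multiset" where "Fm k = mset_set {1..k}"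
definition MM :: "nat multiset \<Rightarrow> nat multiset" where "MM A = (\<Sum>i\<in>set_mset A. Fm (count A i))"

lemma cnt_union: "cnt d (M + N) = cnt d M + cnt d N" by (simp add: cnt_def)
lemma cnt_add: "cnt d (add_mset a M) = (if d dvd a then 1 else 0) + cnt d M" by (simp add: cnt_def)
lemma cnt_empty: "cnt d {#} = 0" by (simp add: cnt_def)

lemma card_dvd_upto: "(d::nat) > 0 \<Longrightarrow> card {x\<in>{1..k}. d dvd x} = k div d"
proof (induction k)
  case 0 then show ?case by simp
next
  case (Suc k)
  have eq: "{x\<in>{1..Suc k}. d dvd x} = {x\<in>{1..k}. d dvd x} \<union> (if d dvd Suc k then {Suc k} else {})"
    by (auto simp: le_Suc_eq)
  show ?case
  proof (cases "d dvd Suc k")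
    case True
    then have "{x\<in>{1..Suc k}. d dvd x} = insert (Suc k) {x\<in>{1..k}. d dvd x}" using eq by auto
    then show ?thesis using Suc True by (simp add: div_Suc dvd_eq_mod_eq_0)
  next
    case False
    then have "{x\<in>{1..Suc k}. d dvd x} = {x\<in>{1..k}. d dvd x}" using eq by auto
    then show ?thesis using Suc False by (simp add: div_Suc dvd_eq_mod_eq_0)
  qed
qed

lemma cnt_Fm: "(d::nat) > 0 \<Longrightarrow> cnt d (Fm k) = k div d"
  unfolding cnt_def Fm_def using card_dvd_upto[of d k] by simp

lemma cnt_sum: "finite S \<Longrightarrow> cnt d (\<Sum>s\<in>S. f s) = (\<Sum>s\<in>S. cnt d (f s))"
  by (induction S rule: finite_induct) (simp_all add: cnt_union cnt_empty)

lemma cnt_MM: "(d::nat) > 0 \<Longrightarrow> cnt d (MM A) = SS A d"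
proof -
  assume "d > 0"
  have "cnt d (MM A) = (\<Sum>i\<in>set_mset A. cnt d (Fm (count A i)))" unfolding MM_def by (simp add: cnt_sum)
  also have "\<dots> = SS A d" unfolding SS_def
    by (intro sum.cong refl) (simp add: cnt_Fm \<open>d > 0\<close>)
  finally show ?thesis .
qed

lemma zero_Fm: "0 \<notin># Fm k" by (simp add: Fm_def)
lemma zero_MM: "0 \<notin># MM A"
proof -
  have "count (MM A) 0 = 0" unfolding MM_def count_sum by (simp add: Fm_def)
  then show ?thesis by (simp add: count_eq_zero_iff)
qed

lemma prod_Fm: "prod_mset (image_mset (qint q) (Fm k)) = qfact q k"
  by (simp add: Fm_def qfact_def prod_unfold_prod_mset)

lemma prod_sum_mset: "finite S \<Longrightarrow> prod_mset (image_mset g (\<Sum>s\<in>S. f s)) = (\<Prod>s\<in>S. prod_mset (image_mset g (f s)))"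
  by (induction S rule: finite_induct) simp_all

lemma prod_MM: "prod_mset (image_mset (qint q) (MM A)) = (\<Prod>i\<in>set_mset A. qfact q (count A i))"
  unfolding MM_def by (simp add: prod_sum_mset prod_Fm)



definition NMs :: "nat \<Rightarrow> nat \<Rightarrow> nat \<Rightarrow> nat \<Rightarrow> nat \<Rightarrow> nat \<Rightarrow> nat \<Rightarrow> nat multiset" where
  "NMs n m c r s R S = {#n*m, 2*c, n-R, m-S#} + Fm n + Fm m + Fm r + Fm s + Fm c + Fm c"

definition DMs :: "nat \<Rightarrow> nat \<Rightarrow> nat \<Rightarrow> nat \<Rightarrow> nat \<Rightarrow>
    nat multiset \<Rightarrow> nat multiset \<Rightarrow> nat multiset \<Rightarrow> nat multiset \<Rightarrow> nat multiset" where
  "DMs n m c r s alpha beta lam mu = {#n, m, c, c#} + Fm r + Fm (n-r) + Fm s + Fm (m-s)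
     + MM alpha + MM beta + MM lam + MM mu"

lemma count_ineq:
  fixes n m c r s R S :: nat and alpha beta lam mu :: "nat multiset"
  assumes "n > 0" and "m > 0" and "c > 0"
    and "alpha \<in> Par R r" and "beta \<in> Par S s"
    and "lam \<in> Par (n - R) c" and "mu \<in> Par (m - S) c"
    and d: "d > 0"
  shows "cnt d (DMs n m c r s alpha beta lam mu) \<le> cnt d (NMs n m c r s R S)"
proof -
  have a: "0 \<notin># alpha" "size alpha = r" "sum_mset alpha = R" using assms(4) by (auto simp: Par_def)
  have b: "0 \<notin># beta" "size beta = s" "sum_mset beta = S" using assms(5) by (auto simp: Par_def)
  have l: "0 \<notin># lam" "size lam = c" "sum_mset lam = n - R" using assms(6) by (auto simp: Par_def)
  have u: "0 \<notin># mu" "size mu = c" "sum_mset mu = m - S" using assms(7) by (auto simp: Par_def)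
  have "c \<le> n - R" using size_le_sum_mset[OF l(1)] l by simp
  then have Rn: "R \<le> n" using assms(3) by simp
  have "c \<le> m - S" using size_le_sum_mset[OF u(1)] u by simp
  then have Sm: "S \<le> m" using assms(3) by simp
  have A1: "(n - r) div d + SS alpha d + (if d dvd n \<and> \<not> d dvd (n - R) then 1 else 0) \<le> n div d"
    using alpha_side[OF d a Rn] .
  have A2: "(m - s) div d + SS beta d + (if d dvd m \<and> \<not> d dvd (m - S) then 1 else 0) \<le> m div d"
    using alpha_side[OF d b Sm] .
  have L1: "SS lam d + (if d dvd c then 1 else 0) \<le> c div d + (if d dvd (n - R) then 1 else 0)"
    and L2: "SS lam d \<le> c div d" using lam_side[OF d l] by auto
  have U1: "SS mu d + (if d dvd c then 1 else 0) \<le> c div d + (if d dvd (m - S) then 1 else 0)"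
    and U2: "SS mu d \<le> c div d" using lam_side[OF d u] by auto
  have nm1: "d dvd n \<Longrightarrow> d dvd n * m" and nm2: "d dvd m \<Longrightarrow> d dvd n * m" by auto
  have cc: "d dvd c \<Longrightarrow> d dvd 2 * c" by auto
  have CD: "cnt d (DMs n m c r s alpha beta lam mu) =
      (if d dvd n then 1 else 0) + (if d dvd m then 1 else 0) + (if d dvd c then 1 else 0) + (if d dvd c then 1 else 0)
      + r div d + (n - r) div d + s div d + (m - s) div d + SS alpha d + SS beta d + SS lam d + SS mu d"
    unfolding DMs_def by (simp add: cnt_union cnt_add cnt_empty cnt_Fm cnt_MM d)
  have CN: "cnt d (NMs n m c r s R S) =
      (if d dvd n * m then 1 else 0) + (if d dvd 2 * c then 1 else 0) + (if d dvd (n - R) then 1 else 0) + (if d dvd (m - S) then 1 else 0)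
      + n div d + m div d + r div d + s div d + c div d + c div d"
    unfolding NMs_def by (simp add: cnt_union cnt_add cnt_empty cnt_Fm d)
  show ?thesis unfolding CD CN
  proof (cases "d dvd n")
    case dn: True
    show "(if d dvd n then 1 else 0) + (if d dvd m then 1 else 0) + (if d dvd c then 1 else 0) + (if d dvd c then 1 else 0)
      + r div d + (n - r) div d + s div d + (m - s) div d + SS alpha d + SS beta d + SS lam d + SS mu d \<le>
      (if d dvd n * m then 1 else 0) + (if d dvd 2 * c then 1 else 0) + (if d dvd (n - R) then 1 else 0) + (if d dvd (m - S) then 1 else 0)
      + n div d + m div d + r div d + s div d + c div d + c div d"
    proof (cases "d dvd m")
      case dm: True
      show ?thesis
      proof (cases "d dvd c")
        case True
        then show ?thesis using dn dm A1 A2 L1 U1 nm1 cc by (simp split: if_split_asm)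
      next
        case False
        then show ?thesis using dn dm A1 A2 L2 U2 nm1 by (simp split: if_split_asm)
      qed
    next
      case False
      then show ?thesis using dn A1 A2 L1 U1 nm1 cc by (simp split: if_split_asm if_split)
    qed
  next
    case dn: False
    show "(if d dvd n then 1 else 0) + (if d dvd m then 1 else 0) + (if d dvd c then 1 else 0) + (if d dvd c then 1 else 0)
      + r div d + (n - r) div d + s div d + (m - s) div d + SS alpha d + SS beta d + SS lam d + SS mu d \<le>
      (if d dvd n * m then 1 else 0) + (if d dvd 2 * c then 1 else 0) + (if d dvd (n - R) then 1 else 0) + (if d dvd (m - S) then 1 else 0)
      + n div d + m div d + r div d + s div d + c div d + c div d"
      using dn A1 A2 L1 U1 nm2 cc by (simp split: if_split_asm if_split)
  qed
qed



lemma mem_le_sum_mset: "x \<in># (M :: nat multiset) \<Longrightarrow> x \<le> sum_mset M"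
  by (induction M) auto

lemma sum_conj_shift:
  assumes "\<forall>x\<in>#L. x \<le> Suc K"
  shows "(\<Sum>i\<in>{1..K}. size (filter_mset (\<lambda>x. Suc i \<le> x) L)) = sum_mset (image_mset (\<lambda>x. x - 1) L)"
  using assms
proof (induction L)
  case empty then show ?case by simp
next
  case (add a L)
  have aK: "a \<le> Suc K" using add.prems by simp
  have "(\<Sum>i\<in>{1..K}. size (filter_mset (\<lambda>x. Suc i \<le> x) (add_mset a L)))
      = (\<Sum>i\<in>{1..K}. size (filter_mset (\<lambda>x. Suc i \<le> x) L) + (if Suc i \<le> a then 1 else 0))"
    by (intro sum.cong) auto
  also have "\<dots> = (\<Sum>i\<in>{1..K}. size (filter_mset (\<lambda>x. Suc i \<le> x) L)) + card {i\<in>{1..K}. Suc i \<le> a}"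
    by (simp add: sum.distrib sum.If_cases Int_def)
  also have "{i\<in>{1..K}. Suc i \<le> a} = {1..a - 1}" using aK by auto
  finally show ?case using add by simp
qed

lemma sum_minus_one: "0 \<notin># L \<Longrightarrow> sum_mset (image_mset (\<lambda>x. x - 1) L) + size L = sum_mset (L :: nat multiset)"
  by (induction L) auto

lemma tau_bound:
  assumes L: "0 \<notin># L" "size L = c" "sum_mset L = N"
  shows "tau L \<le> c * (N - c)"
proof -
  have cp: "conj_part L i \<le> c" for i unfolding conj_part_def using size_filter_mset_lesseq L(2) by metis
  have "tau L = (\<Sum>i\<in>{1..N}. conj_part L i * conj_part L (i+1))" by (simp add: tau_def L(3))
  also have "\<dots> \<le> (\<Sum>i\<in>{1..N}. c * conj_part L (i+1))" by (intro sum_mono mult_right_mono cp) simp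
  also have "\<dots> = c * (\<Sum>i\<in>{1..N}. size (filter_mset (\<lambda>x. Suc i \<le> x) L))"
    by (simp add: sum_distrib_left conj_part_def)
  also have "(\<Sum>i\<in>{1..N}. size (filter_mset (\<lambda>x. Suc i \<le> x) L)) = sum_mset (image_mset (\<lambda>x. x - 1) L)"
    using mem_le_sum_mset[of _ L] L(3) by (intro sum_conj_shift) (auto simp: le_SucI)
  also have "\<dots> = N - c" using sum_minus_one[OF L(1)] L by simp
  finally show ?thesis .
qed



lemma qint_pos: "(q::real) > 0 \<Longrightarrow> q \<noteq> 1 \<Longrightarrow> k > 0 \<Longrightarrow> qint q k > 0"
proof -
  assume q: "q > 0" "q \<noteq> 1" and k: "k > 0"
  have "qint q k = (\<Sum>i<k. q ^ i)" using poly_qp_real[OF q(2), of k] poly_qp[of k q] by simp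
  also have "\<dots> > 0" using k q(1) by (intro sum_pos) auto
  finally show ?thesis .
qed

lemma qfact_pos: "(q::real) > 0 \<Longrightarrow> q \<noteq> 1 \<Longrightarrow> qfact q k > 0"
  unfolding qfact_def by (intro prod_pos) (auto intro: qint_pos)

lemma int_bound: "(t::nat) \<le> a * (b - a) \<Longrightarrow> a \<le> b \<Longrightarrow> int t \<le> int a * (int b - int a)"
proof -
  assume h: "t \<le> a * (b - a)" "a \<le> b"
  have "int t \<le> int (a * (b - a))" using h(1) by (simp only: of_nat_le_iff)
  also have "\<dots> = int a * (int b - int a)" using h(2) by (simp add: of_nat_diff)
  finally show ?thesis .
qed

lemma field_ident:
  fixes Q a b c2 x y z w Fn Fm Fr Fs Fc Fnr Fms Pa Pb Pl Pu :: real
  assumes "b \<noteq> 0" "c2 \<noteq> 0" "w \<noteq> 0" "Fr \<noteq> 0" "Fnr \<noteq> 0" "Fs \<noteq> 0" "Fms \<noteq> 0"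
    "Pa \<noteq> 0" "Pb \<noteq> 0" "Pl \<noteq> 0" "Pu \<noteq> 0"
  shows "Q * (a / (b * c2)) * (x / 2) * (y * z / w ^ 2) * (Fn / (Fr * Fnr)) * (Fm / (Fs * Fms))
      * (Fr / Pa) * (Fs / Pb) * (Fc / Pl) * (Fc / Pu)
    = Q * (a * x * y * z * Fn * Fm * Fr * Fs * Fc * Fc) / (b * c2 * w * w * Fr * Fnr * Fs * Fms * Pa * Pb * Pl * Pu) / 2"
  using assms by (simp add: field_simps power2_eq_square)

theorem proposition3p2:
  fixes n m c r s R S :: nat and alpha beta lam mu :: "nat multiset"
  assumes "n > 0" and "m > 0" and "c > 0"
    and "alpha \<in> Par R r" and "beta \<in> Par S s"
    and "lam \<in> Par (n - R) c" and "mu \<in> Par (m - S) c"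
  shows "\<exists>p :: rat poly. \<forall>q :: real. q > 0 \<and> q \<noteq> 1 \<longrightarrow>
           annular_kre q n m c r s R S alpha beta lam mu = poly (map_poly of_rat p) q"
proof -
  have a: "0 \<notin># alpha" "size alpha = r" "sum_mset alpha = R" using assms(4) by (auto simp: Par_def)
  have b: "0 \<notin># beta" "size beta = s" "sum_mset beta = S" using assms(5) by (auto simp: Par_def)
  have l: "0 \<notin># lam" "size lam = c" "sum_mset lam = n - R" using assms(6) by (auto simp: Par_def)
  have u: "0 \<notin># mu" "size mu = c" "sum_mset mu = m - S" using assms(7) by (auto simp: Par_def)
  have cnR: "c \<le> n - R" using size_le_sum_mset[OF l(1)] l by simp
  have cmS: "c \<le> m - S" using size_le_sum_mset[OF u(1)] u by simp
  have rR: "r \<le> R" using size_le_sum_mset[OF a(1)] a by simp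
  have sS: "s \<le> S" using size_le_sum_mset[OF b(1)] b by simp
  have Rn: "R < n" using cnR assms(3) by simp
  have Sm: "S < m" using cmS assms(3) by simp
  have ta: "tau alpha \<le> r * (R - r)" using tau_bound[OF a] .
  have tb: "tau beta \<le> s * (S - s)" using tau_bound[OF b] .
  have tl: "tau lam \<le> c * (n - R - c)" using tau_bound[OF l] .
  have tu: "tau mu \<le> c * (m - S - c)" using tau_bound[OF u] .
  define E where "E = kre_exp n m c r s R S alpha beta lam mu"
  have E0: "E \<ge> 0"
  proof -
    have i1: "int (tau alpha) \<le> int r * (int R - int r)" using int_bound[OF ta rR] .
    have i2: "int (tau beta) \<le> int s * (int S - int s)" using int_bound[OF tb sS] .
    have i3: "int (tau lam) \<le> int c * (int n - int R - int c)" using int_bound[OF tl cnR] Rn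
      by (simp add: of_nat_diff)
    have i4: "int (tau mu) \<le> int c * (int m - int S - int c)" using int_bound[OF tu cmS] Sm
      by (simp add: of_nat_diff)
    have p1: "0 \<le> int c * (int c - 1)" using assms(3) by simp
    have p2: "0 \<le> int r * (int c + int r)" by simp
    have p3: "0 \<le> int s * (int c + int s)" by simp
    have p4: "0 \<le> int r * (int n - int c - int R)" using cnR Rn by simp
    have p5: "0 \<le> int s * (int m - int c - int S)" using cmS Sm by simp
    show ?thesis unfolding E_def kre_exp_def Let_def using i1 i2 i3 i4 p1 p2 p3 p4 p5 by linarith
  qed
  define e where "e = nat E"
  have powi: "q powi E = q ^ e" for q :: real using E0 unfolding e_def by (simp add: power_int_def)
  define NM where "NM = NMs n m c r s R S"
  define DM where "DM = DMs n m c r s alpha beta lam mu"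
  have zN: "0 \<notin># NM" unfolding NM_def NMs_def using assms(1-3) Rn Sm by (auto simp: zero_Fm)
  have zD: "0 \<notin># DM" unfolding DM_def DMs_def using assms(1-3) by (auto simp: zero_Fm zero_MM)
  have "(QP DM :: rat poly) dvd QP NM"
    using QP_dvd[OF zD zN] count_ineq[OF assms] unfolding NM_def DM_def by blast
  then obtain Qt :: "rat poly" where Qt: "QP NM = QP DM * Qt" by (elim dvdE)
  define p where "p = [:1/2:] * (monom 1 e * Qt)"
  show ?thesis
  proof (intro exI allI impI)
    fix q :: real assume q: "q > 0 \<and> q \<noteq> 1"
    have q1: "q \<noteq> 1" using q by simp
    have qpos: "q > 0" using q by simp
    have PN: "poly (QP NM) q = poly (QP DM) q * poly (map_poly of_rat Qt) q"
    proof -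
      have "(QP NM :: real poly) = map_poly of_rat (QP NM :: rat poly)" by (simp add: map_rat_QP)
      also have "\<dots> = QP DM * map_poly of_rat Qt" unfolding Qt map_rat_mult map_rat_QP ..
      finally show ?thesis by simp
    qed
    have qi: "\<And>k. k > 0 \<Longrightarrow> qint q k \<noteq> 0" using qint_pos qpos q1 by (metis less_irrefl)
    have qf: "\<And>k. qfact q k \<noteq> 0" using qfact_pos qpos q1 by (metis less_irrefl)
    have qP: "\<And>A. (\<Prod>i\<in>set_mset A. qfact q (count A i)) \<noteq> 0" using qf by (simp add: prod_zero_iff)
    have ePN: "poly (QP NM) q = qint q (n*m) * qint q (2*c) * qint q (n - R) * qint q (m - S)
        * qfact q n * qfact q m * qfact q r * qfact q s * qfact q c * qfact q c"
      unfolding poly_QP_real[OF q1] NM_def NMs_def by (simp add: prod_Fm mult_ac)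
    have ePD: "poly (QP DM) q = qint q n * qint q m * qint q c * qint q c
        * qfact q r * qfact q (n - r) * qfact q s * qfact q (m - s)
        * (\<Prod>i\<in>set_mset alpha. qfact q (count alpha i)) * (\<Prod>i\<in>set_mset beta. qfact q (count beta i))
        * (\<Prod>i\<in>set_mset lam. qfact q (count lam i)) * (\<Prod>i\<in>set_mset mu. qfact q (count mu i))"
      unfolding poly_QP_real[OF q1] DM_def DMs_def by (simp add: prod_Fm prod_MM mult_ac)
    have PDnz: "poly (QP DM) q \<noteq> 0" unfolding ePD using qi qf qP assms(1-3) by simp
    have "annular_kre q n m c r s R S alpha beta lam mu = q ^ e * poly (QP NM) q / poly (QP DM) q / 2"
      unfolding annular_kre_def qbinom_def qmultinom_def E_def[symmetric] powi ePN ePD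
      by (rule field_ident) (use qi qf qP assms(1-3) in auto)
    also have "\<dots> = q ^ e * poly (map_poly of_rat Qt) q / 2" using PDnz unfolding PN by simp
    also have "\<dots> = poly (map_poly of_rat p) q"
      unfolding p_def map_rat_mult by (simp add: map_poly_monom poly_monom map_poly_pCons of_rat_divide)
    finally show "annular_kre q n m c r s R S alpha beta lam mu = poly (map_poly of_rat p) q" .
  qed
qed

end
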